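(* Let $n\ge7$ be odd, $p>\frac{309n+62}{2}$ a prime, and $\mathcal{G}$ a strongly connected digraph with more than one vertex. In the dgl $\tilde{\mathcal L}$, for all vertices $s\neq s'$ of $\mathcal{G}$, the brackets $[x_s,[x_s,[x_{s'},[w_1,w_2]]]]$, $[x_s,[x_{s'},[x_s,[w_1,w_2]]]]$, $[x_{s'},[x_s,[x_s,[w_1,w_2]]]]$ are linearly independent, and any nonzero linear combination of them is not a boundary in $\tilde{\mathcal L}$.
   Context: $\tilde{\mathcal L}=(\mathbb{L}(w_1,w_2,w_3,w_4,w_5,x_v\mid v\in V(\mathcal G)),\partial)$ is the free differential graded Lie algebra over $\mathbb{Z}_{(p)}$ with $|w_1|=16n+3$, $|w_2|=21n+4$, $|w_3|=28n+5$, $|w_4|=42n+9$, $|w_5|=56n+11$, $|x_v|=96n+18$, and differential (of degree $-1$) $\partial(w_1)=\partial(w_2)=\partial(w_3)=\partial(x_v)=0$, $\partial(w_4)=[w_2,w_2]$, $\partial(w_5)=[w_3,w_3]$. A digraph is strongly connected if any two vertices are joined by a directed path. *)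

theory Defs
  imports Main "HOL-Computational_Algebra.Primes" "Graph_Theory.Digraph_Component"
begin

datatype 'a gen = W nat | X 'a

fun gdeg :: "nat \<Rightarrow> 'a gen \<Rightarrow> nat" where
  "gdeg n (W i) = (if i = 1 then 16*n+3 else if i = 2 then 21*n+4 else if i = 3 then 28*n+5
                   else if i = 4 then 42*n+9 else if i = 5 then 56*n+11 else 0)"
| "gdeg n (X v) = 96*n+18"

definition wdeg :: "nat \<Rightarrow> 'a gen list \<Rightarrow> nat" where
  "wdeg n u = sum_list (map (gdeg n) u)"

text \<open>The local ring Z_(p), as a subset of the rationals.\<close>
definition Zloc :: "nat \<Rightarrow> rat set" where
  "Zloc p = {q. coprime (snd (quotient_of q)) (int p)}"

text \<open>Elements of the tensor algebra T(V) are coefficient functions on words.\<close>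
type_synonym 'a tens = "'a gen list \<Rightarrow> rat"

definition gvec :: "'a gen \<Rightarrow> 'a tens" where
  "gvec x = (\<lambda>w. if w = [x] then 1 else 0)"

definition tadd :: "'a tens \<Rightarrow> 'a tens \<Rightarrow> 'a tens" where
  "tadd f g = (\<lambda>w. f w + g w)"

definition tsmult :: "rat \<Rightarrow> 'a tens \<Rightarrow> 'a tens" where
  "tsmult c f = (\<lambda>w. c * f w)"

text \<open>Graded commutator [a,b] = ab - (-1)^(|a||b|) ba, extended bilinearly.\<close>
definition tbr :: "nat \<Rightarrow> 'a tens \<Rightarrow> 'a tens \<Rightarrow> 'a tens" where
  "tbr n f g = (\<lambda>w. \<Sum>i\<in>{0..length w}.
      f (take i w) * g (drop i w)
      - (-1) ^ (wdeg n (take i w) * wdeg n (drop i w)) * g (take i w) * f (drop i w))"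

definition dgen :: "nat \<Rightarrow> 'a gen \<Rightarrow> 'a tens" where
  "dgen n x = (if x = W 4 then tbr n (gvec (W 2)) (gvec (W 2))
               else if x = W 5 then tbr n (gvec (W 3)) (gvec (W 3))
               else (\<lambda>_. 0))"

text \<open>The differential, extended to T(V) as the derivation of degree -1 with Koszul sign:
  d(x_1...x_k) = sum_j (-1)^(|x_1...x_(j-1)|) x_1...x_(j-1) d(x_j) x_(j+1)...x_k.
  The coefficient of a word w = pre @ mid @ suf collects the contribution of
  pre @ [x] @ suf with x a generator with nonzero differential (w4 or w5).\<close>
definition tdiff :: "nat \<Rightarrow> 'a tens \<Rightarrow> 'a tens" where
  "tdiff n f = (\<lambda>w. \<Sum>i\<in>{0..length w}. \<Sum>k\<in>{i..length w}. \<Sum>x\<in>{W 4, W 5}.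
      (-1) ^ (wdeg n (take i w)) * f (take i w @ [x] @ drop k w)
        * dgen n x (take (k - i) (drop i w)))"

text \<open>The free graded Lie algebra L(w_1,...,w_5, x_v | v in V) over Z_(p),
  realised as the Lie subalgebra of the tensor algebra generated by the generators.\<close>
inductive_set fdgl :: "nat \<Rightarrow> nat \<Rightarrow> 'a set \<Rightarrow> 'a tens set" for n p V where
  genW: "i \<in> {1..5} \<Longrightarrow> gvec (W i) \<in> fdgl n p V"
| genX: "v \<in> V \<Longrightarrow> gvec (X v) \<in> fdgl n p V"
| zero: "(\<lambda>_. 0) \<in> fdgl n p V"
| add: "f \<in> fdgl n p V \<Longrightarrow> g \<in> fdgl n p V \<Longrightarrow> tadd f g \<in> fdgl n p V"
| smult: "c \<in> Zloc p \<Longrightarrow> f \<in> fdgl n p V \<Longrightarrow> tsmult c f \<in> fdgl n p V"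
| br: "f \<in> fdgl n p V \<Longrightarrow> g \<in> fdgl n p V \<Longrightarrow> tbr n f g \<in> fdgl n p V"

end

theory Submission
  imports Defs
begin

lemma take_eq_single:
  assumes "w \<noteq> []" "i \<le> length w"
  shows "(take i w = [x]) \<longleftrightarrow> (i = 1 \<and> hd w = x)"
  using assms by (cases w; cases i) auto

lemma drop_eq_single:
  assumes "w \<noteq> []" "i \<le> length w"
  shows "(drop i w = [x]) \<longleftrightarrow> (i = length w - 1 \<and> last w = x)"
proof
  assume h: "drop i w = [x]"
  hence "length w - i = 1" by (metis length_drop length_Cons list.size(3) One_nat_def)
  moreover have "last w = x" using h assms
    by (metis append_take_drop_id last_appendR last_ConsL not_Cons_self2)
  ultimately show "i = length w - 1 \<and> last w = x" by auto
next
  assume "i = length w - 1 \<and> last w = x"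
  thus "drop i w = [x]" using assms
  proof -
    have "w = butlast w @ [last w]" using assms by simp
    moreover have "length (butlast w) = length w - 1" by simp
    moreover have "drop (length (butlast w)) (butlast w @ [last w]) = [last w]" by simp
    ultimately show ?thesis using \<open>i = length w - 1 \<and> last w = x\<close> by metis
  qed
qed

lemma gvec_app: "gvec x [] = 0" "gvec x [y] = (if y = x then 1 else 0)" "gvec x (y # z # zs) = 0"
  by (auto simp: gvec_def)

lemma tbr_gvec:
  assumes "w \<noteq> []"
  shows "tbr n (gvec x) g w = (if hd w = x then g (tl w) else 0)
     - (if last w = x then (-1) ^ (wdeg n (butlast w) * wdeg n [x]) * g (butlast w) else 0)"
proof -
  have 1: "tbr n (gvec x) g w = (\<Sum>i\<in>{0..length w}. gvec x (take i w) * g (drop i w))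
     - (\<Sum>i\<in>{0..length w}. (-1) ^ (wdeg n (take i w) * wdeg n (drop i w)) * g (take i w) * gvec x (drop i w))"
    unfolding tbr_def by (simp only: sum_subtractf)
  have 2: "gvec x (take i w) * g (drop i w) = (if i = 1 then (if hd w = x then g (tl w) else 0) else 0)"
    if "i \<in> {0..length w}" for i
  proof (cases "i = 1")
    case True
    have "take 1 w = [hd w]" "drop 1 w = tl w" using assms by (cases w; simp)+
    then show ?thesis using True by (simp add: gvec_app)
  next
    case False
    then have "take i w \<noteq> [x]" using take_eq_single[OF assms] that by auto
    then show ?thesis using False by (simp add: gvec_def)
  qed
  have 3: "(-1) ^ (wdeg n (take i w) * wdeg n (drop i w)) * g (take i w) * gvec x (drop i w)
     = (if i = length w - 1 then (if last w = x then (-1) ^ (wdeg n (butlast w) * wdeg n [x]) * g (butlast w) else 0) else 0)"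
    if "i \<in> {0..length w}" for i
  proof (cases "i = length w - 1")
    case True
    have "drop i w = [last w]" "take i w = butlast w" using assms True
      by (simp_all add: butlast_conv_take drop_eq_single)
    then show ?thesis using True by (simp add: gvec_app)
  next
    case False
    then have "drop i w \<noteq> [x]" using drop_eq_single[OF assms] that by auto
    then show ?thesis using False by (simp add: gvec_def)
  qed
  have "length w - 1 \<in> {0..length w}" "1 \<in> {0..length w}" using assms by (auto simp: Suc_leI)
  then show ?thesis unfolding 1 using sum.cong[OF refl 2, of "{0..length w}"] sum.cong[OF refl 3, of "{0..length w}"]
    by simp
qed

lemma count_sub: "count_list (take j (drop i w)) a \<le> count_list w a"
proof -
  have "w = take i w @ take j (drop i w) @ drop j (drop i w)" by (metis append_take_drop_id)
  hence "count_list w a = count_list (take i w) a + count_list (take j (drop i w)) a + count_list (drop j (drop i w)) a"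
    by (metis count_list_append add.assoc)
  thus ?thesis by linarith
qed

lemma tbr_gvec_supp: "tbr n (gvec a) (gvec b) m \<noteq> 0 \<Longrightarrow> m = [a, b] \<or> m = [b, a]"
proof -
  assume h: "tbr n (gvec a) (gvec b) m \<noteq> 0"
  then obtain i where "gvec a (take i m) * gvec b (drop i m)
      - (-1) ^ (wdeg n (take i m) * wdeg n (drop i m)) * gvec b (take i m) * gvec a (drop i m) \<noteq> 0"
    unfolding tbr_def by (meson sum.neutral)
  hence "(take i m = [a] \<and> drop i m = [b]) \<or> (take i m = [b] \<and> drop i m = [a])"
    unfolding gvec_def by (auto split: if_splits)
  thus ?thesis by (metis append_take_drop_id append_Cons append_Nil)
qed

lemma dgen_supp: "dgen n x m \<noteq> 0 \<Longrightarrow> m = [W 2, W 2] \<or> m = [W 3, W 3]"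
  unfolding dgen_def using tbr_gvec_supp by (auto split: if_splits)

lemma tdiff_zero:
  assumes "count_list w (W 2) \<le> 1" "count_list w (W 3) \<le> 1"
  shows "tdiff n y w = 0"
  unfolding tdiff_def
proof (intro sum.neutral ballI)
  fix i k x assume "x \<in> {W 4, W 5 :: 'a gen}"
  show "(-1) ^ (wdeg n (take i w)) * y (take i w @ [x] @ drop k w) * dgen n x (take (k - i) (drop i w)) = 0"
  proof (rule ccontr)
    assume "\<not> ?thesis"
    hence "dgen n x (take (k - i) (drop i w)) \<noteq> 0" by auto
    from dgen_supp[OF this] have "count_list (take (k - i) (drop i w)) (W 2) = 2 \<or> count_list (take (k - i) (drop i w)) (W 3) = 2"
      by auto
    with count_sub[of "k-i" i w "W 2"] count_sub[of "k-i" i w "W 3"] assms show False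
      by linarith
  qed
qed
lemma tg1: "y = x \<Longrightarrow> last (y # w) \<noteq> x \<Longrightarrow> tbr n (gvec x) g (y # w) = g w"
  by (simp add: tbr_gvec)
lemma tg0: "y \<noteq> x \<Longrightarrow> last (y # w) \<noteq> x \<Longrightarrow> tbr n (gvec x) g (y # w) = 0"
  by (simp add: tbr_gvec)

theorem lemma3p3:
  fixes n p :: nat and G :: "('a, 'b) pre_digraph" and s s' :: 'a
  assumes "odd n" and "n \<ge> 7"
    and "prime p" and "real p > (309 * real n + 62) / 2"
    and "wf_digraph G" and "strongly_connected G"
    and "\<exists>u v. u \<in> verts G \<and> v \<in> verts G \<and> u \<noteq> v"
    and "s \<in> verts G" and "s' \<in> verts G" and "s \<noteq> s'"
  defines "w12 \<equiv> tbr n (gvec (W 1)) (gvec (W 2))"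
  defines "e1 \<equiv> tbr n (gvec (X s)) (tbr n (gvec (X s)) (tbr n (gvec (X s')) w12))"
    and "e2 \<equiv> tbr n (gvec (X s)) (tbr n (gvec (X s')) (tbr n (gvec (X s)) w12))"
    and "e3 \<equiv> tbr n (gvec (X s')) (tbr n (gvec (X s)) (tbr n (gvec (X s)) w12))"
  defines "comb \<equiv> (\<lambda>a b c. tadd (tsmult a e1) (tadd (tsmult b e2) (tsmult c e3)))"
  shows "(\<forall>a\<in>Zloc p. \<forall>b\<in>Zloc p. \<forall>c\<in>Zloc p.
            comb a b c = (\<lambda>_. 0) \<longrightarrow> a = 0 \<and> b = 0 \<and> c = 0)
       \<and> (\<forall>a\<in>Zloc p. \<forall>b\<in>Zloc p. \<forall>c\<in>Zloc p. (a, b, c) \<noteq> (0, 0, 0) \<longrightarrow>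
            \<not> (\<exists>y \<in> fdgl n p (verts G). tdiff n y = comb a b c))"
proof -
  define u1 where "u1 = [X s, X s, X s', W 1, W 2]"
  define u2 where "u2 = [X s, X s', X s, W 1, W 2]"
  define u3 where "u3 = [X s', X s, X s, W 1, W 2]"
  have c: "comb a b c u1 = a" "comb a b c u2 = b" "comb a b c u3 = c" for a b c
    using assms(10) unfolding comb_def e1_def e2_def e3_def w12_def u1_def u2_def u3_def
    by (simp_all add: tadd_def tsmult_def tg1 tg0 gvec_app)
  have t: "tdiff n y u1 = 0" "tdiff n y u2 = 0" "tdiff n y u3 = 0" for y :: "'a tens"
    unfolding u1_def u2_def u3_def by (rule tdiff_zero; simp)+
  have A: "a = 0 \<and> b = 0 \<and> c = 0" if "comb a b c = (\<lambda>_. 0)" for a b c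
    using c[of a b c] that by metis
  have B: "\<not> (\<exists>y \<in> fdgl n p (verts G). tdiff n y = comb a b c)" if "(a, b, c) \<noteq> (0, 0, 0)" for a b c
  proof
    assume "\<exists>y \<in> fdgl n p (verts G). tdiff n y = comb a b c"
    then obtain y where "tdiff n y = comb a b c" by blast
    hence "a = 0" "b = 0" "c = 0" using c[of a b c] t[of y] by metis+
    thus False using that by simp
  qed
  show ?thesis using A B by blast
qed

end
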